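(* Let $\varphi,\psi\in G$ satisfy $\lim_{t\to0+}\psi(t)/\varphi(t)=0$, $\delta_\varphi<1$, and $M(\tilde\varphi)\subset\Lambda(\psi)$. Then there exists a function $\rho\in G$ such that (1) $\lim_{t\to 0+}\rho(t)/\varphi(t)=0$, and (2) $M(\tilde\rho)\subset\Lambda(\psi)$.
   Context: All functions are Lebesgue measurable on $[0,1]$, and $x^*$ denotes the decreasing left-continuous rearrangement of $|x|$. $G$ denotes the class of all positive increasing concave functions on $(0,1]$. For $\psi\in G$, the Lorentz space $\Lambda(\psi)$ consists of all measurable $x$ with $\|x\|_{\Lambda(\psi)}=\int_0^1 x^*(s)\,d\psi(s)<\infty$. For $\varphi\in G$ put $\tilde\varphi(t)=t/\varphi(t)$; the Marcinkiewicz space $M(\tilde\varphi)$ consists of all measurable $x$ with $\|x\|_{M(\tilde\varphi)}=\sup_{0<t\le1}\frac{1}{\tilde\varphi(t)}\int_0^t x^*(s)\,ds<\infty$ (similarly $M(\tilde\rho)$). For a positive function $f$ on $(0,1]$, its dilation function is $\mathcal M_f(t)=\sup\{f(st)/f(s):0<s\le\min(1,1/t)\}$ for $t>0$, and its upper dilation index is $\delta_f=\lim_{t\to\infty}\ln\mathcal M_f(t)/\ln t$. *)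

theory Defs
  imports "HOL-Analysis.Analysis"
begin

definition meas01 :: "(real \<Rightarrow> real) \<Rightarrow> bool" where
  "meas01 x \<longleftrightarrow> x \<in> borel_measurable (lebesgue_on {0..1})"

definition distrib_fun :: "(real \<Rightarrow> real) \<Rightarrow> real \<Rightarrow> real" where
  "distrib_fun x l = measure lebesgue {s \<in> {0..1}. \<bar>x s\<bar> > l}"

text \<open>Decreasing left-continuous rearrangement of |x|, for 0 < t \<le> 1.\<close>
definition rearr :: "(real \<Rightarrow> real) \<Rightarrow> real \<Rightarrow> real" where
  "rearr x t = Inf {l. l \<ge> 0 \<and> distrib_fun x l < t}"

definition classG :: "(real \<Rightarrow> real) \<Rightarrow> bool" where
  "classG f \<longleftrightarrow> (\<forall>t\<in>{0<..1}. f t > 0) \<and> mono_on {0<..1} f \<and> concave_on {0<..1} f"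

text \<open>Extension of \<psi> to the real line used to build the Lebesgue--Stieltjes measure d\<psi>
  on (0,1] (continuous, constant outside (0,1]).\<close>
definition ext_fun :: "(real \<Rightarrow> real) \<Rightarrow> real \<Rightarrow> real" where
  "ext_fun \<psi> t = (if t \<le> 0 then (INF s\<in>{0<..1}. \<psi> s) else if t \<le> 1 then \<psi> t else \<psi> 1)"

definition lorentz_norm :: "(real \<Rightarrow> real) \<Rightarrow> (real \<Rightarrow> real) \<Rightarrow> ennreal" where
  "lorentz_norm \<psi> x = (\<integral>\<^sup>+ s. ennreal (rearr x s) * indicator {0<..1} s \<partial>interval_measure (ext_fun \<psi>))"

definition lorentz_space :: "(real \<Rightarrow> real) \<Rightarrow> (real \<Rightarrow> real) set" where
  "lorentz_space \<psi> = {x. meas01 x \<and> lorentz_norm \<psi> x < \<infinity>}"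

definition tilde :: "(real \<Rightarrow> real) \<Rightarrow> real \<Rightarrow> real" where
  "tilde \<phi> t = t / \<phi> t"

definition marcinkiewicz_space :: "(real \<Rightarrow> real) \<Rightarrow> (real \<Rightarrow> real) set" where
  "marcinkiewicz_space w = {x. meas01 x \<and> (\<exists>C::real. \<forall>t\<in>{0<..1}.
      (\<integral>\<^sup>+ s. ennreal (rearr x s) * indicator {0<..t} s \<partial>lborel) \<le> ennreal (C * w t))}"

definition dilation_fun :: "(real \<Rightarrow> real) \<Rightarrow> real \<Rightarrow> real" where
  "dilation_fun f t = (SUP s\<in>{s. 0 < s \<and> s \<le> min 1 (1/t)}. f (s * t) / f s)"

definition upper_dilation_index :: "(real \<Rightarrow> real) \<Rightarrow> real" where
  "upper_dilation_index f = Lim at_top (\<lambda>t. ln (dilation_fun f t) / ln t)"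

end

theory Submission
  imports Defs
begin
lemma cG_conc:
  assumes "classG f" "x \<in> {0<..1}" "y \<in> {0<..1}" "0 \<le> u" "u \<le> 1"
  shows "f ((1-u)*x + u*y) \<ge> (1-u) * f x + u * f y"
  using concave_onD[of "{0<..1}" f u x y] assms by (auto simp: classG_def)

lemma cG_pos: "classG f \<Longrightarrow> 0 < t \<Longrightarrow> t \<le> 1 \<Longrightarrow> f t > 0"
  by (auto simp: classG_def)

lemma cG_mono: "classG f \<Longrightarrow> 0 < s \<Longrightarrow> s \<le> t \<Longrightarrow> t \<le> 1 \<Longrightarrow> f s \<le> f t"
  by (auto simp: classG_def mono_on_def)

lemma cG_ratio:
  assumes G: "classG f" and a: "0 < a" "a \<le> b" "b \<le> 1"
  shows "a * f b \<le> b * f a"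
proof (rule ccontr)
  assume nt: "\<not> a * f b \<le> b * f a"
  define d where "d = a * f b - b * f a"
  have d: "d > 0" using nt by (simp add: d_def)
  have ab: "a < b" using d a unfolding d_def by (cases "a = b") auto
  have fb: "f b > 0" using cG_pos[OF G] a by auto
  have fa: "f a > 0" using cG_pos[OF G] a by auto
  have key: "f a * (b - e) \<ge> (a - e) * f b" if e: "0 < e" "e < a" for e
  proof -
    define u where "u = (a - e) / (b - e)"
    have u: "0 \<le> u" "u \<le> 1" using e ab by (auto simp: u_def)
    have ue: "u*(b-e) = a - e" using e ab unfolding u_def by simp
    have eq: "(1-u)*e + u*b = a" using ue by (simp add: algebra_simps)
    have H: "f ((1-u)*e + u*b) \<ge> (1-u) * f e + u * f b"
      by (rule cG_conc[OF G]) (use e a u in auto)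
    have "f e > 0" using cG_pos[OF G] e a by auto
    then have "(1-u) * f e \<ge> 0" using u by simp
    then have "f a \<ge> u * f b" using H unfolding eq by linarith
    then show ?thesis using e ab unfolding u_def by (simp add: field_simps)
  qed
  define e where "e = min (a/2) (d / (2 * f b))"
  have e: "0 < e" "e < a" using d fb a by (auto simp: e_def)
  have "e \<le> d / (2 * f b)" unfolding e_def by simp
  then have "e * f b \<le> d / (2 * f b) * f b" by (rule mult_right_mono) (use fb in auto)
  moreover have "d / (2 * f b) * f b = d / 2" using fb by simp
  ultimately have ed: "e * f b \<le> d / 2" by simp
  have k: "f a * b - f a * e \<ge> a * f b - e * f b" using key[OF e] by (simp add: algebra_simps)
  have "e * f a \<ge> 0" using e fa by simp
  then show False using k ed d unfolding d_def by (simp add: algebra_simps)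
qed

lemma tphi_lim:
  assumes G: "classG \<phi>" "classG \<psi>" and L: "((\<lambda>t. \<psi> t / \<phi> t) \<longlongrightarrow> 0) (at_right 0)"
  shows "((\<lambda>t. t / \<phi> t) \<longlongrightarrow> 0) (at_right 0)"
proof (rule tendsto_sandwich[where f="\<lambda>_. 0" and h="\<lambda>t. (\<psi> t / \<phi> t) / \<psi> 1"])
  have ev: "eventually (\<lambda>t. 0 < t \<and> t < 1) (at_right (0::real))"
    by (simp add: eventually_at_right_field) (metis zero_less_one)
  show "eventually (\<lambda>t. 0 \<le> t / \<phi> t) (at_right 0)"
    using ev
  proof eventually_elim
    case (elim t)
    then show ?case using cG_pos[OF G(1), of t] by simp
  qed
  show "eventually (\<lambda>t. t / \<phi> t \<le> (\<psi> t / \<phi> t) / \<psi> 1) (at_right 0)"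
    using ev
  proof eventually_elim
    case (elim t)
    have p1: "\<psi> 1 > 0" "\<phi> t > 0" using cG_pos[OF G(2), of 1] cG_pos[OF G(1), of t] elim by auto
    have "t * \<psi> 1 \<le> 1 * \<psi> t" using cG_ratio[OF G(2), of t 1] elim by auto
    then show ?case using p1 by (simp add: field_simps)
  qed
  show "((\<lambda>t. (\<psi> t / \<phi> t) / \<psi> 1) \<longlongrightarrow> 0) (at_right 0)"
    using tendsto_divide[OF L tendsto_const[of "\<psi> 1"]] cG_pos[OF G(2), of 1] by simp
qed simp

lemma dil_le:
  assumes G: "classG \<phi>" and T: "T > 1" and u: "0 < u" "u \<le> 1/T"
  shows "\<phi> (u*T) \<le> T * \<phi> u"
proof -
  have uT: "u * T \<le> 1" using u T by (simp add: field_simps)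
  have "u * \<phi> (u*T) \<le> (u*T) * \<phi> u" using cG_ratio[OF G, of u "u*T"] u T uT by auto
  then show ?thesis using u by (simp add: algebra_simps)
qed

lemma dil_exists:
  assumes G: "classG \<phi>" and I: "upper_dilation_index \<phi> < 1"
  shows "\<exists>T \<beta>. T > 1 \<and> 1 \<le> \<beta> \<and> \<beta> < T \<and> (\<forall>u. 0 < u \<and> u \<le> 1/T \<longrightarrow> \<phi> (u*T) \<le> \<beta> * \<phi> u)"
proof -
  define S where "S T = {s::real. 0 < s \<and> s \<le> min 1 (1/T)}" for T
  have S: "S T = {s. 0 < s \<and> s \<le> 1/T}" if "T > 1" for T
    using that by (auto simp: S_def)
  have ne: "S T \<noteq> {}" if "T > 1" for T
  proof -
    have "1/T \<in> S T" using that unfolding S[OF that] by simp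
    then show ?thesis by blast
  qed
  have bnd: "\<phi> (s*T) / \<phi> s \<le> T" if "T > 1" "s \<in> S T" for T s
  proof -
    have s: "0 < s" "s \<le> 1/T" using that(2) unfolding S[OF that(1)] by auto
    have "1/T \<le> 1" using that(1) by simp
    then have "s \<le> 1" using s by linarith
    then have "\<phi> s > 0" using cG_pos[OF G] s by auto
    then show ?thesis using dil_le[OF G that(1) s] by (simp add: field_simps)
  qed
  have bdd: "bdd_above ((\<lambda>s. \<phi> (s*T) / \<phi> s) ` S T)" if "T > 1" for T
    using bnd[OF that] by (auto intro!: bdd_aboveI)
  have dle: "dilation_fun \<phi> T \<le> T" if "T > 1" for T
    unfolding dilation_fun_def S_def[symmetric]
    by (rule cSUP_least) (use ne[OF that] bnd[OF that] in auto)
  have "\<exists>T>1. dilation_fun \<phi> T < T"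
  proof (rule ccontr)
    assume "\<not> (\<exists>T>1. dilation_fun \<phi> T < T)"
    then have eqT: "dilation_fun \<phi> T = T" if "T > 1" for T using dle[OF that] that by force
    have "eventually (\<lambda>t. ln (dilation_fun \<phi> t) / ln t = 1) at_top"
      unfolding eventually_at_top_linorder
      by (rule exI[of _ 2]) (auto simp: eqT)
    then have "((\<lambda>t. ln (dilation_fun \<phi> t) / ln t) \<longlongrightarrow> 1) at_top"
      by (rule tendsto_eventually)
    then have "upper_dilation_index \<phi> = 1"
      unfolding upper_dilation_index_def by (rule tendsto_Lim[rotated]) simp
    then show False using I by simp
  qed
  then obtain T where T: "T > 1" "dilation_fun \<phi> T < T" by blast
  define \<beta> where "\<beta> = dilation_fun \<phi> T"
  have up: "\<phi> (u*T) \<le> \<beta> * \<phi> u" if "0 < u" "u \<le> 1/T" for u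
  proof -
    have uS: "u \<in> S T" using that unfolding S[OF T(1)] by auto
    have "\<phi> (u*T) / \<phi> u \<le> \<beta>" unfolding \<beta>_def dilation_fun_def S_def[symmetric]
      by (rule cSUP_upper[OF uS bdd[OF T(1)]])
    moreover have "1/T \<le> 1" using T by simp
    then have "u \<le> 1" using that by linarith
    then have "\<phi> u > 0" using cG_pos[OF G] that by auto
    ultimately show ?thesis by (simp add: field_simps)
  qed
  have h1: "\<phi> 1 \<le> \<beta> * \<phi> (1/T)" using up[of "1/T"] T by auto
  have h2: "\<phi> (1/T) \<le> \<phi> 1" "\<phi> (1/T) > 0" using cG_mono[OF G, of "1/T" 1] cG_pos[OF G, of "1/T"] T by auto
  have "1 \<le> \<beta>"
  proof (rule ccontr)
    assume "\<not> 1 \<le> \<beta>"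
    then have "\<beta> * \<phi> (1/T) < 1 * \<phi> (1/T)" using h2 by (intro mult_strict_right_mono) auto
    then show False using h1 h2 by linarith
  qed
  then show ?thesis using T up unfolding \<beta>_def by blast
qed

lemma dil_pow:
  assumes G: "classG \<phi>" and T: "T > 1" "1 \<le> \<beta>" "\<beta> < T"
    and up: "\<And>u. 0 < u \<Longrightarrow> u \<le> 1/T \<Longrightarrow> \<phi> (u*T) \<le> \<beta> * \<phi> u"
    and ab: "0 < a" "a \<le> b" "b \<le> 1"
  shows "\<phi> b \<le> \<beta> * (b/a) powr (ln \<beta> / ln T) * \<phi> a"
proof -
  define \<gamma> where "\<gamma> = ln \<beta> / ln T"
  have g0: "\<gamma> \<ge> 0" using T unfolding \<gamma>_def by simp
  have Tg: "T powr \<gamma> = \<beta>" using T unfolding \<gamma>_def powr_def by simp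
  have main: "\<forall>a b. 0 < a \<and> a \<le> b \<and> b \<le> 1 \<and> b/a < T^n \<longrightarrow> \<phi> b \<le> \<beta> * (b/a) powr \<gamma> * \<phi> a" for n
  proof (induction n)
    case 0
    then show ?case by (auto simp: field_simps)
  next
    case (Suc n)
    show ?case
    proof (intro allI impI)
      fix a b :: real assume h: "0 < a \<and> a \<le> b \<and> b \<le> 1 \<and> b/a < T^Suc n"
      have fa: "\<phi> a > 0" using cG_pos[OF G] h by auto
      show "\<phi> b \<le> \<beta> * (b/a) powr \<gamma> * \<phi> a"
      proof (cases "b/a < T")
        case True
        have p1: "(b/a) powr \<gamma> \<ge> 1" using h g0 by (intro ge_one_powr_ge_zero) auto
        have "\<phi> b \<le> \<beta> * \<phi> a"
        proof (cases "a \<le> 1/T")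
          case True
          have "b < a*T" using \<open>b/a < T\<close> h by (simp add: field_simps)
          moreover have "a*T \<le> 1" using True T by (simp add: field_simps)
          ultimately have "\<phi> b \<le> \<phi> (a*T)" using cG_mono[OF G, of b "a*T"] h by auto
          then show ?thesis using up[of a] True h by auto
        next
          case False
          have "\<phi> b \<le> \<phi> 1" using cG_mono[OF G, of b 1] h by auto
          also have "\<phi> 1 \<le> \<beta> * \<phi> (1/T)" using up[of "1/T"] T by auto
          also have "\<phi> (1/T) \<le> \<phi> a" using cG_mono[OF G, of "1/T" a] False T h by auto
          then have "\<beta> * \<phi> (1/T) \<le> \<beta> * \<phi> a" using T by (simp add: mult_left_mono)
          finally show ?thesis .
        qed
        also have "\<beta> * \<phi> a \<le> \<beta> * (b/a) powr \<gamma> * \<phi> a"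
          using p1 fa T by (simp add: mult_right_mono)
        finally show ?thesis .
      next
        case False
        define a' where "a' = a * T"
        have a': "0 < a'" "a' \<le> b" using False h T by (auto simp: a'_def field_simps)
        have ba': "b/a' = (b/a)/T" by (simp add: a'_def)
        have "b/a' < T^n" unfolding ba' 
          by (subst pos_divide_less_eq) (use T h in \<open>auto simp: power_Suc2 mult.commute\<close>)
        then have IH: "\<phi> b \<le> \<beta> * (b/a') powr \<gamma> * \<phi> a'" using Suc.IH a' h by auto
        have aT: "a \<le> 1/T" using a' h T by (simp add: a'_def field_simps)
        have "\<phi> a' \<le> \<beta> * \<phi> a" using up[of a] aT h by (simp add: a'_def)
        have pw: "(b/a') powr \<gamma> = (b/a) powr \<gamma> / \<beta>"
          unfolding ba' using h T by (subst powr_divide) (auto simp: Tg)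
        have "\<beta> * (b/a') powr \<gamma> \<ge> 0" using T by simp
        then have "\<beta> * (b/a') powr \<gamma> * \<phi> a' \<le> \<beta> * (b/a') powr \<gamma> * (\<beta> * \<phi> a)"
          using \<open>\<phi> a' \<le> \<beta> * \<phi> a\<close> by (rule mult_left_mono[rotated])
        then have "\<phi> b \<le> \<beta> * (b/a') powr \<gamma> * (\<beta> * \<phi> a)"
          using IH by linarith
        also have "\<dots> = \<beta> * (b/a) powr \<gamma> * \<phi> a" unfolding pw using T by simp
        finally show ?thesis .
      qed
    qed
  qed
  obtain n where "b/a < T^n" using real_arch_pow[OF T(1)] by blast
  then show ?thesis using main[of n] ab unfolding \<gamma>_def by blast
qed


lemma meas_set:
  assumes "meas01 x"
  shows "{s \<in> {0..1}. l < \<bar>x s\<bar>} \<in> sets lebesgue"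
proof -
  have xm: "x \<in> borel_measurable (lebesgue_on {0..1})" using assms by (simp add: meas01_def)
  have "{s \<in> space (lebesgue_on {0..1}). l < \<bar>x s\<bar>} \<in> sets (lebesgue_on {0..1})"
    using xm by measurable
  moreover have "{0..1::real} \<inter> space lebesgue \<in> sets lebesgue" by simp
  ultimately show ?thesis using sets_restrict_space_iff[of "{0..1::real}" lebesgue] by simp
qed

lemma fm01: "{0..1::real} \<in> fmeasurable lebesgue"
  using lmeasurable_cbox[of "0::real" 1] by (simp add: cbox_interval)

lemma meas_set_f:
  assumes "meas01 x"
  shows "{s \<in> {0..1}. l < \<bar>x s\<bar>} \<in> fmeasurable lebesgue"
  by (rule fmeasurableI2[OF fm01]) (use meas_set[OF assms] in auto)

lemma S_nonempty:
  assumes m: "meas01 x" and t: "t > 0"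
  shows "\<exists>l\<ge>0. distrib_fun x l < t"
proof -
  define A where "A n = {s \<in> {0..1}. real n < \<bar>x s\<bar>}" for n :: nat
  have rs: "range A \<subseteq> sets lebesgue" using meas_set[OF m] by (auto simp: A_def)
  have dec: "decseq A" unfolding decseq_def A_def by auto
  have fin: "emeasure lebesgue (A n) \<noteq> \<infinity>" for n
    using meas_set_f[OF m, of "real n"] by (auto simp: A_def fmeasurable_def)
  have emp: "(\<Inter>i. A i) = {}"
  proof (rule ccontr)
    assume "(\<Inter>i. A i) \<noteq> {}"
    then obtain s where sA: "\<forall>i. s \<in> A i" by blast
    obtain n where n: "\<bar>x s\<bar> < real n" using reals_Archimedean2 by blast
    have "s \<in> A n" using sA by blast
    then show False using n unfolding A_def by simp
  qed
  have "(\<lambda>n. measure lebesgue (A n)) \<longlonglongrightarrow> 0"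
    using Lim_measure_decseq[OF rs dec fin] emp by simp
  then have "eventually (\<lambda>n. measure lebesgue (A n) < t) sequentially"
    using t by (rule order_tendstoD(2))
  then obtain n where "measure lebesgue (A n) < t" by (auto simp: eventually_sequentially)
  then show ?thesis unfolding distrib_fun_def A_def by (intro exI[of _ "real n"]) auto
qed

lemma rearr_le:
  assumes "l \<ge> 0" "distrib_fun x l < t"
  shows "rearr x t \<le> l"
  unfolding rearr_def by (rule cInf_lower) (use assms in \<open>auto intro: bdd_belowI[of _ 0]\<close>)

lemma rearr_ge0:
  assumes "meas01 x" "t > 0"
  shows "rearr x t \<ge> 0"
  unfolding rearr_def by (rule cInf_greatest) (use S_nonempty[OF assms] in auto)

lemma rearr_ge:
  assumes "meas01 x" "t > 0" "\<And>l. l \<ge> 0 \<Longrightarrow> distrib_fun x l < t \<Longrightarrow> v \<le> l"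
  shows "v \<le> rearr x t"
  unfolding rearr_def by (rule cInf_greatest) (use S_nonempty[OF assms(1,2)] assms(3) in auto)

lemma rearr_anti:
  assumes "meas01 x" "0 < s" "s \<le> t"
  shows "rearr x t \<le> rearr x s"
  unfolding rearr_def
  by (rule cInf_superset_mono) (use S_nonempty[OF assms(1,2)] assms in \<open>auto intro: bdd_belowI[of _ 0]\<close>)

definition x0 :: "(real \<Rightarrow> real) \<Rightarrow> real \<Rightarrow> real" where
  "x0 f s = (if 0 < s \<and> s \<le> 1 then 1 / f s else 0)"

lemma x0_borel:
  assumes G: "classG f"
  shows "x0 f \<in> borel_measurable borel"
proof -
  have "mono_on {0<..1} (\<lambda>s. - (1 / f s))"
    unfolding mono_on_def
  proof (intro allI impI)
    fix r s :: real assume h: "r \<in> {0<..1} \<and> s \<in> {0<..1} \<and> r \<le> s"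
    then have "f r \<le> f s" "f r > 0" using cG_mono[OF G, of r s] cG_pos[OF G, of r] by auto
    then show "- (1 / f r) \<le> - (1 / f s)" by (simp add: frac_le)
  qed
  then have "(\<lambda>s. - (1 / f s)) \<in> borel_measurable (restrict_space borel {0<..1})"
    by (rule borel_measurable_mono_on_fnc)
  then have "(\<lambda>s. indicator {0<..1} s *\<^sub>R (- (1 / f s))) \<in> borel_measurable borel"
    by (subst (asm) borel_measurable_restrict_space_iff) auto
  then have "(\<lambda>s. - (indicator {0<..1} s *\<^sub>R (- (1 / f s)))) \<in> borel_measurable borel"
    by measurable
  moreover have "(\<lambda>s. - (indicator {0<..1} s *\<^sub>R (- (1 / f s)))) = x0 f"
    by (auto simp: x0_def fun_eq_iff indicator_def)
  ultimately show ?thesis by simp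
qed

lemma x0_meas01:
  assumes G: "classG f"
  shows "meas01 (x0 f)"
  unfolding meas01_def
proof (rule measurable_restrict_space1)
  have "x0 f \<in> borel_measurable lborel" using x0_borel[OF G] by simp
  then show "x0 f \<in> borel_measurable lebesgue" by (rule measurable_completion)
qed

lemma x0_rearr_upper:
  assumes G: "classG f" and t: "0 < t" "t \<le> 1"
  shows "rearr (x0 f) t \<le> 1 / f (t/2)"
proof (rule rearr_le)
  have fp: "f (t/2) > 0" using cG_pos[OF G, of "t/2"] t by auto
  then show "1 / f (t/2) \<ge> 0" by simp
  have sub: "{s \<in> {0..1}. 1 / f (t/2) < \<bar>x0 f s\<bar>} \<subseteq> {0..t/2}"
  proof
    fix s assume "s \<in> {s \<in> {0..1}. 1 / f (t/2) < \<bar>x0 f s\<bar>}"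
    then have s: "0 \<le> s" "s \<le> 1" "1 / f (t/2) < \<bar>x0 f s\<bar>" by auto
    have fp': "1 / f (t/2) > 0" using fp by simp
    have s0: "0 < s" by (rule ccontr) (use s fp' in \<open>auto simp: x0_def\<close>)
    have fs: "f s > 0" using cG_pos[OF G] s0 s by auto
    have "1 / f (t/2) < 1 / f s" using s s0 fs by (simp add: x0_def)
    have "f s < f (t/2)"
    proof (rule ccontr)
      assume "\<not> f s < f (t/2)"
      then have "1 / f s \<le> 1 / f (t/2)" using fp fs by (simp add: field_simps)
      then show False using \<open>1 / f (t/2) < 1 / f s\<close> by simp
    qed
    then have "s < t/2" using cG_mono[OF G, of "t/2" s] t s0 s by force
    then show "s \<in> {0..t/2}" using s by auto
  qed
  have "distrib_fun (x0 f) (1 / f (t/2)) \<le> measure lebesgue {0..t/2}"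
    unfolding distrib_fun_def
    by (rule measure_mono_fmeasurable[OF sub]) (use meas_set[OF x0_meas01[OF G]] lmeasurable_cbox[of 0 "t/2"] in \<open>auto simp: cbox_interval\<close>)
  also have "\<dots> = t/2" using t by simp
  finally show "distrib_fun (x0 f) (1 / f (t/2)) < t" using t by simp
qed

lemma x0_rearr_lower:
  assumes G: "classG f" and t: "0 < t" "t \<le> 1"
  shows "1 / f t \<le> rearr (x0 f) t"
proof (rule rearr_ge[OF x0_meas01[OF G] t(1)])
  fix l :: real assume l: "l \<ge> 0" "distrib_fun (x0 f) l < t"
  show "1 / f t \<le> l"
  proof (rule ccontr)
    assume "\<not> 1 / f t \<le> l"
    then have lt: "l < 1 / f t" by simp
    have sub: "{0<..t} \<subseteq> {s \<in> {0..1}. l < \<bar>x0 f s\<bar>}"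
    proof
      fix s assume s: "s \<in> {0<..t}"
      have "f s \<le> f t" "f s > 0" using cG_mono[OF G, of s t] cG_pos[OF G, of s] s t by auto
      then have "1 / f t \<le> 1 / f s" by (simp add: frac_le)
      then show "s \<in> {s \<in> {0..1}. l < \<bar>x0 f s\<bar>}" using s t lt \<open>f s > 0\<close> by (auto simp: x0_def)
    qed
    have "measure lebesgue {0<..t} \<le> distrib_fun (x0 f) l"
      unfolding distrib_fun_def
      by (rule measure_mono_fmeasurable[OF sub]) (simp, rule meas_set_f[OF x0_meas01[OF G]])
    moreover have "measure lebesgue {0<..t} = t" using t by simp
    ultimately show False using l by simp
  qed
qed


lemma x0_marc:
  assumes G: "classG \<phi>" and T: "T > 1" "1 \<le> \<beta>" "\<beta> < T"
    and up: "\<And>u. 0 < u \<Longrightarrow> u \<le> 1/T \<Longrightarrow> \<phi> (u*T) \<le> \<beta> * \<phi> u"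
  shows "x0 \<phi> \<in> marcinkiewicz_space (tilde \<phi>)"
proof -
  define \<gamma> where "\<gamma> = ln \<beta> / ln T"
  have g0: "\<gamma> \<ge> 0" using T unfolding \<gamma>_def by simp
  have g1: "\<gamma> < 1" using T unfolding \<gamma>_def by simp
  define C where "C = \<beta> * 2 powr \<gamma> / (1 - \<gamma>)"
  have bound: "(\<integral>\<^sup>+ s. ennreal (rearr (x0 \<phi>) s) * indicator {0<..t} s \<partial>lborel) \<le> ennreal (C * tilde \<phi> t)"
    if t: "0 < t" "t \<le> 1" for t
  proof -
    have ft: "\<phi> t > 0" using cG_pos[OF G] t by auto
    define K where "K = \<beta> * (2*t) powr \<gamma> / \<phi> t"
    have K0: "K \<ge> 0" using T ft by (simp add: K_def)
    have pt: "ennreal (rearr (x0 \<phi>) s) * indicator {0<..t} s \<le> ennreal (K * s powr (-\<gamma>)) * indicator {0..t} s" for s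
    proof (cases "s \<in> {0<..t}")
      case True
      then have s: "0 < s" "s \<le> t" by auto
      have fs: "\<phi> (s/2) > 0" using cG_pos[OF G, of "s/2"] s t by auto
      have "\<phi> t \<le> \<beta> * (t/(s/2)) powr \<gamma> * \<phi> (s/2)"
        using dil_pow[OF G T up, of "s/2" t] s t unfolding \<gamma>_def by auto
      also have "(t/(s/2)) powr \<gamma> = (2*t) powr \<gamma> * s powr (-\<gamma>)"
        using s t by (simp add: powr_divide powr_minus_divide field_simps)
      finally have "\<phi> t \<le> \<beta> * ((2*t) powr \<gamma> * s powr (-\<gamma>)) * \<phi> (s/2)" .
      then have "1 / \<phi> (s/2) \<le> K * s powr (-\<gamma>)"
        using fs ft by (simp add: K_def field_simps)
      moreover have "rearr (x0 \<phi>) s \<le> 1 / \<phi> (s/2)" using x0_rearr_upper[OF G, of s] s t by auto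
      ultimately show ?thesis using True by (auto intro: ennreal_leI)
    qed simp
    have hi: "((\<lambda>s. K * s powr (-\<gamma>)) has_integral (K * (t powr (-\<gamma>+1) / (-\<gamma>+1)))) {0..t}"
      by (rule has_integral_mult_right, rule has_integral_powr_from_0) (use g1 t in auto)
    have "(\<integral>\<^sup>+ s. ennreal (rearr (x0 \<phi>) s) * indicator {0<..t} s \<partial>lborel)
        \<le> (\<integral>\<^sup>+ s. ennreal (K * s powr (-\<gamma>)) * indicator {0..t} s \<partial>lborel)"
      by (rule nn_integral_mono) (use pt in auto)
    also have "\<dots> = ennreal (K * (t powr (-\<gamma>+1) / (-\<gamma>+1)))"
      by (rule nn_integral_has_integral_lebesgue'[OF _ hi]) (use K0 in auto)
    also have "K * (t powr (-\<gamma>+1) / (-\<gamma>+1)) = C * tilde \<phi> t"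
    proof -
      have "(2*t) powr \<gamma> * t powr (-\<gamma>+1) = 2 powr \<gamma> * t"
        using t by (simp add: powr_mult powr_add[symmetric])
      then show ?thesis unfolding K_def C_def tilde_def using ft g1
        by (simp add: field_simps)
    qed
    finally show ?thesis .
  qed
  have "\<forall>t\<in>{0<..1}. (\<integral>\<^sup>+ s. ennreal (rearr (x0 \<phi>) s) * indicator {0<..t} s \<partial>lborel) \<le> ennreal (C * tilde \<phi> t)"
    using bound by auto
  then show ?thesis unfolding marcinkiewicz_space_def
    using x0_meas01[OF G] by (intro CollectI conjI exI[of _ C])
qed


theorem lemma1:
  fixes \<phi> \<psi> :: "real \<Rightarrow> real"
  assumes "classG \<phi>" and "classG \<psi>"
    and "((\<lambda>t. \<psi> t / \<phi> t) \<longlongrightarrow> 0) (at_right 0)"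
    and "upper_dilation_index \<phi> < 1"
    and "marcinkiewicz_space (tilde \<phi>) \<subseteq> lorentz_space \<psi>"
  shows "\<exists>\<rho>. classG \<rho> \<and> ((\<lambda>t. \<rho> t / \<phi> t) \<longlongrightarrow> 0) (at_right 0)
             \<and> marcinkiewicz_space (tilde \<rho>) \<subseteq> lorentz_space \<psi>"
proof -
  note G = assms(1) and G2 = assms(2)
  obtain T \<beta> where T: "T > 1" "1 \<le> \<beta>" "\<beta> < T"
    and up: "\<And>u. 0 < u \<Longrightarrow> u \<le> 1/T \<Longrightarrow> \<phi> (u*T) \<le> \<beta> * \<phi> u"
    using dil_exists[OF G assms(4)] by blast
  have "x0 \<phi> \<in> lorentz_space \<psi>" using x0_marc[OF G T up] assms(5) by blast
  then have lnx0: "lorentz_norm \<psi> (x0 \<phi>) < \<infinity>" by (simp add: lorentz_space_def)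
  define \<nu> where "\<nu> = interval_measure (ext_fun \<psi>)"
  have mcong: "borel_measurable \<nu> = borel_measurable borel"
    unfolding \<nu>_def by (rule measurable_cong_sets) auto
  define h where "h s = ennreal (x0 \<phi> s)" for s
  have hm: "h \<in> borel_measurable borel"
    unfolding h_def using x0_borel[OF G] by measurable
  have hv: "h s = ennreal (1 / \<phi> s)" if "0 < s" "s \<le> 1" for s
    using that by (simp add: h_def x0_def)
  have h0: "h s = 0" if "\<not> (0 < s \<and> s \<le> 1)" for s
    using that unfolding h_def x0_def by auto
  have hfin: "(\<integral>\<^sup>+ s. h s \<partial>\<nu>) < \<infinity>"
  proof -
    have "(\<integral>\<^sup>+ s. h s \<partial>\<nu>) \<le> lorentz_norm \<psi> (x0 \<phi>)"
      unfolding lorentz_norm_def \<nu>_def[symmetric]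
    proof (rule nn_integral_mono)
      fix s
      show "h s \<le> ennreal (rearr (x0 \<phi>) s) * indicator {0<..1} s"
      proof (cases "0 < s \<and> s \<le> 1")
        case True
        then show ?thesis using x0_rearr_lower[OF G, of s] by (simp add: hv ennreal_leI)
      next
        case False
        then show ?thesis by (simp add: h0)
      qed
    qed
    then show ?thesis using lnx0 by simp
  qed
  define m where "m t = (\<integral>\<^sup>+ s. h s * indicator {0<..t} s \<partial>\<nu>)" for t
  have INF0: "(INF i. m (1 / Suc i)) = 0"
  proof -
    define f where "f i s = h s * indicator {0<..1 / Suc i} s" for i s
    have fm: "f i \<in> borel_measurable \<nu>" for i
      unfolding mcong f_def using hm by measurable
    have dec: "decseq f"
    proof (rule decseq_SucI, rule le_funI)
      fix i s
      have "1 / real (Suc (Suc i)) \<le> 1 / real (Suc i)" by (simp add: frac_le)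
      then show "f (Suc i) s \<le> f i s" unfolding f_def
        by (cases "s \<in> {0<..1 / Suc (Suc i)}") (auto simp: indicator_def)
    qed
    have ffin: "(\<integral>\<^sup>+ s. f i s \<partial>\<nu>) < \<infinity>" for i
    proof -
      have "(\<integral>\<^sup>+ s. f i s \<partial>\<nu>) \<le> (\<integral>\<^sup>+ s. h s \<partial>\<nu>)"
        unfolding f_def by (rule nn_integral_mono) (simp add: indicator_def)
      then show ?thesis using hfin by simp
    qed
    have pw: "(INF i. f i s) = 0" for s
    proof (cases "s > 0")
      case True
      obtain i where "inverse (real (Suc i)) < s" using reals_Archimedean[OF True] by blast
      then have "f i s = 0" unfolding f_def by (simp add: inverse_eq_divide)
      moreover have "(INF i. f i s) \<le> f i s" by (rule INF_lower) simp
      ultimately show ?thesis by simp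
    next
      case False
      then have "f i s = 0" for i unfolding f_def by simp
      then show ?thesis by simp
    qed
    have e1: "(\<integral>\<^sup>+ s. (INF i. f i s) \<partial>\<nu>) = (INF i. integral\<^sup>N \<nu> (f i))"
      by (rule nn_integral_monotone_convergence_INF_decseq[OF dec fm ffin])
    have e2: "(\<integral>\<^sup>+ s. (INF i. f i s) \<partial>\<nu>) = 0" by (simp add: pw)
    have e3: "(\<lambda>i. integral\<^sup>N \<nu> (f i)) = (\<lambda>i. m (1 / Suc i))" unfolding f_def m_def by simp
    show ?thesis using e1 e2 unfolding e3 by simp
  qed
  have "\<forall>k. \<exists>i. m (1 / Suc i) < ennreal ((1/4)^k)"
  proof
    fix k :: nat
    have "(INF i. m (1 / Suc i)) < ennreal ((1/4)^k)" unfolding INF0 by simp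
    then show "\<exists>i. m (1 / Suc i) < ennreal ((1/4)^k)" by (simp add: INF_less_iff)
  qed
  from choice[OF this] obtain N where N0: "\<forall>k. m (1 / Suc (N k)) < ennreal ((1/4)^k)" by (elim exE) (rule that)
  have N: "m (1 / Suc (N k)) < ennreal ((1/4)^k)" for k using N0 by (rule spec)
  define tk where "tk k = 1 / real (Suc (N k))" for k
  have tk: "0 < tk k" "tk k \<le> 1" for k unfolding tk_def by (auto simp: field_simps)
  have mtk: "m (tk k) \<le> ennreal ((1/4)^k)" for k using N[of k] unfolding tk_def by simp
  define r where "r j t = (1/2)^j * \<phi> t + t * (\<phi> (tk j) / tk j)" for j t
  define \<rho> where "\<rho> t = (INF j. r j t)" for t
  have ctk: "\<phi> (tk j) / tk j \<ge> \<phi> 1" for j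
    using cG_ratio[OF G, of "tk j" 1] tk[of j] by (simp add: field_simps)
  have ctk0: "\<phi> (tk j) / tk j > 0" for j
    using cG_pos[OF G, of "tk j"] tk[of j] by simp
  have \<phi>1: "\<phi> 1 > 0" using cG_pos[OF G, of 1] by simp
  have rlow: "r j t \<ge> t * \<phi> 1" if "0 < t" "t \<le> 1" for j t
  proof -
    have "(1/2)^j * \<phi> t \<ge> 0" using cG_pos[OF G, of t] that by simp
    moreover have "t * (\<phi> (tk j) / tk j) \<ge> t * \<phi> 1" using ctk[of j] that by (intro mult_left_mono) auto
    ultimately show ?thesis unfolding r_def by linarith
  qed
  have bddr: "bdd_below (range (\<lambda>j. r j t))" if "0 < t" "t \<le> 1" for t
    using rlow[OF that] by (intro bdd_belowI[of _ "t * \<phi> 1"]) auto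
  have \<rho>le: "\<rho> t \<le> r j t" if "0 < t" "t \<le> 1" for j t
    unfolding \<rho>_def by (rule cINF_lower[OF bddr[OF that]]) simp
  have \<rho>ge: "\<rho> t \<ge> t * \<phi> 1" if "0 < t" "t \<le> 1" for t
    unfolding \<rho>_def by (rule cINF_greatest) (use rlow[OF that] in auto)
  have \<rho>pos: "\<rho> t > 0" if "0 < t" "t \<le> 1" for t
  proof -
    have "t * \<phi> 1 > 0" using that \<phi>1 by simp
    then show ?thesis using \<rho>ge[OF that] by linarith
  qed
  have classG_\<rho>: "classG \<rho>"
    unfolding classG_def
  proof (intro conjI)
    show "\<forall>t\<in>{0<..1}. 0 < \<rho> t" using \<rho>pos by auto
    show "mono_on {0<..1} \<rho>"
      unfolding mono_on_def
    proof (intro allI impI)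
      fix s t :: real assume h: "s \<in> {0<..1} \<and> t \<in> {0<..1} \<and> s \<le> t"
      show "\<rho> s \<le> \<rho> t" unfolding \<rho>_def[of t]
      proof (rule cINF_greatest)
        fix j assume "j \<in> (UNIV :: nat set)"
        have "\<phi> s \<le> \<phi> t" using cG_mono[OF G, of s t] h by auto
        then have "r j s \<le> r j t" unfolding r_def using h ctk0[of j]
          by (intro add_mono mult_left_mono mult_right_mono) auto
        then show "\<rho> s \<le> r j t" using \<rho>le[of s j] h by auto
      qed simp
    qed
    show "concave_on {0<..1} \<rho>"
      unfolding concave_on_iff
    proof (intro conjI ballI allI impI)
      show "convex {0<..1::real}" by (rule convex_real_interval)
      fix x y u v :: real
      assume xy: "x \<in> {0<..1}" "y \<in> {0<..1}" and uv: "0 \<le> u" "0 \<le> v" "u + v = 1"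
      have z: "u *\<^sub>R x + v *\<^sub>R y = (1 - v) * x + v * y" using uv by simp
      have zin: "0 < (1 - v) * x + v * y" "(1 - v) * x + v * y \<le> 1"
      proof -
        have "(1 - v) * x \<ge> 0" "v * y \<ge> 0" using uv xy by auto
        moreover have "(1 - v) * x > 0 \<or> v * y > 0" using uv xy
          by (cases "v = 0") auto
        ultimately show "0 < (1 - v) * x + v * y" by linarith
        have "1 - v \<ge> 0" using uv by simp
        then have "(1 - v) * x \<le> (1 - v) * 1" using xy by (intro mult_left_mono) auto
        moreover have "v * y \<le> v * 1" using uv xy by (intro mult_left_mono) auto
        ultimately have "(1 - v) * x \<le> (1 - v) * 1" "v * y \<le> v * 1" by auto
        then show "(1 - v) * x + v * y \<le> 1" by simp
      qed
      show "\<rho> (u *\<^sub>R x + v *\<^sub>R y) \<ge> u * \<rho> x + v * \<rho> y"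
        unfolding z \<rho>_def[of "(1 - v) * x + v * y"]
      proof (rule cINF_greatest)
        fix j assume "j \<in> (UNIV :: nat set)"
        have c: "\<phi> ((1 - v) * x + v * y) \<ge> (1 - v) * \<phi> x + v * \<phi> y"
          by (rule cG_conc[OF G xy]) (use uv in auto)
        have "r j ((1 - v) * x + v * y) \<ge> (1 - v) * r j x + v * r j y"
        proof -
          define p where "p = (1/2::real)^j"
          define cc where "cc = \<phi> (tk j) / tk j"
          define z where "z = (1 - v) * x + v * y"
          have rr: "r j w = p * \<phi> w + w * cc" for w unfolding r_def p_def cc_def by simp
          have "p \<ge> 0" unfolding p_def by simp
          then have "p * \<phi> z \<ge> p * ((1 - v) * \<phi> x + v * \<phi> y)"
            using c unfolding z_def by (rule mult_left_mono[rotated])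
          moreover have "p * ((1 - v) * \<phi> x + v * \<phi> y) = (1 - v) * (p * \<phi> x) + v * (p * \<phi> y)"
            by (simp add: algebra_simps)
          moreover have "z * cc = (1 - v) * (x * cc) + v * (y * cc)" unfolding z_def by (simp add: algebra_simps)
          moreover have "(1 - v) * r j x + v * r j y = (1 - v) * (p * \<phi> x) + v * (p * \<phi> y) + ((1 - v) * (x * cc) + v * (y * cc))"
            unfolding rr by (simp add: algebra_simps)
          ultimately show ?thesis unfolding rr[of z] z_def[symmetric] by linarith
        qed
        moreover have "u * \<rho> x \<le> u * r j x" using \<rho>le[of x j] xy uv by (auto intro: mult_left_mono)
        moreover have "v * \<rho> y \<le> v * r j y" using \<rho>le[of y j] xy uv by (auto intro: mult_left_mono)
        moreover have "1 - v = u" using uv by simp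
        ultimately show "u * \<rho> x + v * \<rho> y \<le> r j ((1 - v) * x + v * y)"
          by (metis add_mono order_trans)
      qed simp
    qed
  qed
  have ev01: "eventually (\<lambda>t. 0 < t \<and> t < 1) (at_right (0::real))"
    by (simp add: eventually_at_right_field) (metis zero_less_one)
  have tl: "((\<lambda>t. t / \<phi> t) \<longlongrightarrow> 0) (at_right 0)" by (rule tphi_lim[OF G G2 assms(3)])
  have lim: "((\<lambda>t. \<rho> t / \<phi> t) \<longlongrightarrow> 0) (at_right 0)"
  proof (rule order_tendstoI)
    fix a :: real assume "a < 0"
    show "eventually (\<lambda>t. a < \<rho> t / \<phi> t) (at_right 0)"
      using ev01
    proof eventually_elim
      case (elim t)
      then have "\<rho> t / \<phi> t > 0" using \<rho>pos[of t] cG_pos[OF G, of t] by simp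
      then show ?case using \<open>a < 0\<close> by linarith
    qed
  next
    fix a :: real assume a: "0 < a"
    obtain j where j: "(1/2::real)^j < a/2" using real_arch_pow_inv[of "a/2" "1/2"] a by auto
    define c where "c = \<phi> (tk j) / tk j"
    have c: "c > 0" using ctk0 unfolding c_def by simp
    have "eventually (\<lambda>t. t / \<phi> t < a / (2 * c)) (at_right 0)"
      using order_tendstoD(2)[OF tl, of "a / (2*c)"] a c by simp
    then show "eventually (\<lambda>t. \<rho> t / \<phi> t < a) (at_right 0)"
      using ev01
    proof eventually_elim
      case (elim t)
      have ft: "\<phi> t > 0" using cG_pos[OF G, of t] elim by simp
      have A: "\<rho> t / \<phi> t \<le> r j t / \<phi> t" using \<rho>le[of t j] elim ft by (simp add: divide_right_mono)
      have B: "r j t / \<phi> t = (1/2)^j + (t / \<phi> t) * c" unfolding r_def c_def using ft by (simp add: field_simps)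
      have C: "(t / \<phi> t) * c < a / (2 * c) * c" by (rule mult_strict_right_mono) (use elim c in auto)
      have D: "a / (2 * c) * c = a / 2" using c by simp
      show ?case using A B C D j by linarith
    qed
  qed
  define D where "D s = 1 + (\<Sum>k. ennreal (2^k) * indicator {0<..tk k} s)" for s
  have Dle: "ennreal (1 / \<rho> s) \<le> D s * ennreal (1 / \<phi> s)" if s: "0 < s" "s \<le> 1" for s
  proof (cases "D s = \<infinity>")
    case True
    have "ennreal (1 / \<phi> s) \<noteq> 0" using cG_pos[OF G, of s] s by simp
    then have "D s * ennreal (1 / \<phi> s) = \<infinity>" using True by (simp add: ennreal_mult_eq_top_iff)
    then show ?thesis by simp
  next
    case False
    then obtain d where d: "D s = ennreal d" "d \<ge> 0" by (cases "D s") auto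
    have fs: "\<phi> s > 0" using cG_pos[OF G, of s] s by simp
    have d1: "1 + ennreal (2^j) * indicator {0<..tk j} s \<le> ennreal d" for j
    proof -
      define F where "F k = ennreal (2^k) * indicator {0<..tk k} s" for k
      have "sum F {j} \<le> suminf F" by (rule sum_le_suminf) auto
      then have "F j \<le> suminf F" by simp
      then have "1 + F j \<le> 1 + suminf F" by (rule add_left_mono)
      then show ?thesis using d(1) unfolding D_def F_def by simp
    qed
    have "(1::ennreal) \<le> 1 + ennreal (2^0) * indicator {0<..tk 0} s" by simp
    then have "1 \<le> ennreal d" using d1[of 0] by (rule order_trans)
    then have dge1: "d \<ge> 1" by simp
    have rj: "r j s \<ge> \<phi> s / d" for j
    proof (cases "s \<le> tk j")
      case True
      have "1 + ennreal (2^j) \<le> ennreal d" using d1[of j] True s by (simp add: indicator_def)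
      moreover have "ennreal (2^j) \<le> 1 + ennreal (2^j)" by (rule add_increasing) auto
      ultimately have "ennreal (2^j) \<le> ennreal d" by (rule order_trans[rotated])
      then have "2^j \<le> d" using d(2) by simp
      moreover have "(0::real) < 2^j" by simp
      ultimately have dp: "d > 0" by linarith
      have "\<phi> s / d \<le> \<phi> s / 2^j" using fs dp \<open>2^j \<le> d\<close> by (intro divide_left_mono) auto
      also have "\<dots> = (1/2)^j * \<phi> s" by (simp add: power_one_over)
      also have "\<dots> \<le> r j s"
      proof -
        have "s * (\<phi> (tk j) / tk j) \<ge> 0" using s ctk0[of j] by (intro mult_nonneg_nonneg) auto
        then show ?thesis unfolding r_def by linarith
      qed
      finally show ?thesis .
    next
      case False
      have "tk j * \<phi> s \<le> s * \<phi> (tk j)" using cG_ratio[OF G, of "tk j" s] False tk[of j] s by simp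
      then have "\<phi> s \<le> s * (\<phi> (tk j) / tk j)" using tk[of j] by (simp add: field_simps)
      also have "\<dots> \<le> r j s" unfolding r_def using fs by simp
      finally have "\<phi> s \<le> r j s" .
      moreover have "\<phi> s / d \<le> \<phi> s" using fs dge1 by (simp add: divide_le_eq)
      ultimately show ?thesis by linarith
    qed
    have "\<rho> s \<ge> \<phi> s / d" unfolding \<rho>_def by (rule cINF_greatest) (use rj in auto)
    then have "1 / \<rho> s \<le> 1 / (\<phi> s / d)" using fs dge1 \<rho>pos[OF s] by (intro divide_left_mono) auto
    also have "1 / (\<phi> s / d) = d * (1 / \<phi> s)" by simp
    finally have "ennreal (1 / \<rho> s) \<le> ennreal (d * (1 / \<phi> s))" by (rule ennreal_leI)
    also have "\<dots> = ennreal d * ennreal (1 / \<phi> s)" by (rule ennreal_mult) (use d fs in auto)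
    also have "\<dots> = D s * ennreal (1 / \<phi> s)" using d(1) by simp
    finally show ?thesis .
  qed
  have Dhfin: "(\<integral>\<^sup>+ s. D s * h s \<partial>\<nu>) < \<infinity>"
  proof -
    have eq: "D s * h s = h s + (\<Sum>k. ennreal (2^k) * (h s * indicator {0<..tk k} s))" for s
    proof -
      have e1: "D s * h s = h s + (\<Sum>k. ennreal (2^k) * indicator {0<..tk k} s) * h s"
        unfolding D_def by (simp only: distrib_right mult.left_neutral)
      have e2: "(\<Sum>k. ennreal (2^k) * indicator {0<..tk k} s) * h s = (\<Sum>k. ennreal (2^k) * indicator {0<..tk k} s * h s)"
        by (rule ennreal_suminf_multc[symmetric])
      have e3: "(\<lambda>k. ennreal (2^k) * indicator {0<..tk k} s * h s) = (\<lambda>k. ennreal (2^k) * (h s * indicator {0<..tk k} s))"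
        by (rule ext) (simp only: mult.assoc mult.commute[of "indicator _ _" "h s"])
      show ?thesis unfolding e1 e2 e3 ..
    qed
    have im: "(\<lambda>s. ennreal (2^k) * (h s * indicator {0<..tk k} s)) \<in> borel_measurable \<nu>" for k
      unfolding mcong using hm by measurable
    have sm: "(\<lambda>s. \<Sum>k. ennreal (2^k) * (h s * indicator {0<..tk k} s)) \<in> borel_measurable \<nu>"
      using im by measurable
    have hm\<nu>: "h \<in> borel_measurable \<nu>" unfolding mcong by (rule hm)
    define SS where "SS = (\<integral>\<^sup>+ s. (\<Sum>k. ennreal (2^k) * (h s * indicator {0<..tk k} s)) \<partial>\<nu>)"
    have I1: "(\<integral>\<^sup>+ s. D s * h s \<partial>\<nu>) = (\<integral>\<^sup>+ s. h s \<partial>\<nu>) + SS"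
      unfolding eq SS_def by (rule nn_integral_add[OF hm\<nu> sm])
    have I2: "SS = (\<Sum>k. \<integral>\<^sup>+ s. ennreal (2^k) * (h s * indicator {0<..tk k} s) \<partial>\<nu>)"
      unfolding SS_def by (rule nn_integral_suminf[OF im])
    have I3k: "(\<integral>\<^sup>+ s. ennreal (2^k) * (h s * indicator {0<..tk k} s) \<partial>\<nu>) = ennreal (2^k) * m (tk k)" for k
      unfolding m_def
      by (rule nn_integral_cmult) (use hm in \<open>unfold mcong, measurable\<close>)
    have I4k: "ennreal (2^k) * m (tk k) \<le> ennreal ((1/2)^k)" for k
    proof -
      have "ennreal (2^k) * m (tk k) \<le> ennreal (2^k) * ennreal ((1/4)^k)"
        by (rule mult_left_mono[OF mtk]) simp
      also have "ennreal (2^k) * ennreal ((1/4)^k) = ennreal (2^k * (1/4)^k)" by (rule ennreal_mult[symmetric]) auto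
      also have "(2::real)^k * (1/4)^k = (1/2)^k" by (simp add: power_mult_distrib[symmetric])
      finally show ?thesis .
    qed
    have I4: "(\<Sum>k. \<integral>\<^sup>+ s. ennreal (2^k) * (h s * indicator {0<..tk k} s) \<partial>\<nu>) \<le> (\<Sum>k. ennreal ((1/2::real)^k))"
      by (rule suminf_le) (simp_all only: I3k I4k summableI)
    have I5: "(\<Sum>k. ennreal ((1/2::real)^k)) = ennreal 2"
    proof -
      have "(\<Sum>k. ennreal ((1/2::real)^k)) = ennreal (\<Sum>k. (1/2::real)^k)"
        by (rule suminf_ennreal2) auto
      also have "(\<Sum>k. (1/2::real)^k) = 2" using suminf_geometric[of "1/2::real"] by simp
      finally show ?thesis .
    qed
    have "SS \<le> ennreal 2" using I2 I4 I5 by simp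
    then have "(\<integral>\<^sup>+ s. D s * h s \<partial>\<nu>) \<le> (\<integral>\<^sup>+ s. h s \<partial>\<nu>) + ennreal 2"
      unfolding I1 by (rule add_left_mono)
    also have "\<dots> < \<infinity>" using hfin by simp
    finally show ?thesis .
  qed
  have incl: "marcinkiewicz_space (tilde \<rho>) \<subseteq> lorentz_space \<psi>"
  proof
    fix x assume "x \<in> marcinkiewicz_space (tilde \<rho>)"
    then have mx: "meas01 x"
      and ex: "\<exists>C. \<forall>t\<in>{0<..1}. (\<integral>\<^sup>+ s. ennreal (rearr x s) * indicator {0<..t} s \<partial>lborel) \<le> ennreal (C * tilde \<rho> t)"
      unfolding marcinkiewicz_space_def mem_Collect_eq by (rule conjunct1, rule conjunct2)
    from ex obtain C where Cb0: "\<forall>t\<in>{0<..1}. (\<integral>\<^sup>+ s. ennreal (rearr x s) * indicator {0<..t} s \<partial>lborel) \<le> ennreal (C * tilde \<rho> t)"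
      by (elim exE)
    have Cb: "(\<integral>\<^sup>+ s. ennreal (rearr x s) * indicator {0<..t} s \<partial>lborel) \<le> ennreal (C * tilde \<rho> t)" if "t \<in> {0<..1}" for t
      using Cb0 that by (rule bspec)
    define C' where "C' = max C 0"
    have pw: "ennreal (rearr x t) \<le> ennreal (C' / \<rho> t)" if t: "0 < t" "t \<le> 1" for t
    proof -
      have rp: "\<rho> t > 0" using \<rho>pos[OF t] .
      have "ennreal (rearr x t) * ennreal t = (\<integral>\<^sup>+ s. ennreal (rearr x t) * indicator {0<..t} s \<partial>lborel)"
        using t by (simp add: nn_integral_cmult_indicator)
      also have "\<dots> \<le> (\<integral>\<^sup>+ s. ennreal (rearr x s) * indicator {0<..t} s \<partial>lborel)"
      proof (rule nn_integral_mono)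
        fix s
        show "ennreal (rearr x t) * indicator {0<..t} s \<le> ennreal (rearr x s) * indicator {0<..t} s"
          using rearr_anti[OF mx, of s t] by (cases "s \<in> {0<..t}") (auto intro: ennreal_leI)
      qed
      also have "\<dots> \<le> ennreal (C * tilde \<rho> t)" using Cb t by simp
      also have "\<dots> \<le> ennreal (C' * (t / \<rho> t))" unfolding tilde_def C'_def using t rp
        by (intro ennreal_leI mult_right_mono) auto
      also have "ennreal (rearr x t) * ennreal t = ennreal (rearr x t * t)"
        by (rule ennreal_mult[symmetric]) (use t rearr_ge0[OF mx t(1)] in auto)
      finally have A: "ennreal (rearr x t * t) \<le> ennreal (C' * (t / \<rho> t))" .
      show ?thesis
      proof (cases "rearr x t \<le> 0")
        case True then show ?thesis by (simp add: ennreal_neg)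
      next
        case False
        have "C' * (t / \<rho> t) \<ge> 0" unfolding C'_def using t rp by simp
        then have "rearr x t * t \<le> C' * (t / \<rho> t)" using A by simp
        then have "rearr x t \<le> C' / \<rho> t" using t rp by (simp add: field_simps)
        then show ?thesis by (rule ennreal_leI)
      qed
    qed
    have "lorentz_norm \<psi> x \<le> (\<integral>\<^sup>+ s. ennreal C' * (D s * h s) \<partial>\<nu>)"
      unfolding lorentz_norm_def \<nu>_def[symmetric]
    proof (rule nn_integral_mono)
      fix s
      show "ennreal (rearr x s) * indicator {0<..1} s \<le> ennreal C' * (D s * h s)"
      proof (cases "0 < s \<and> s \<le> 1")
        case True
        then have s: "0 < s" "s \<le> 1" by auto
        have "ennreal (rearr x s) \<le> ennreal (C' / \<rho> s)" by (rule pw[OF s])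
        also have "\<dots> = ennreal C' * ennreal (1 / \<rho> s)"
        proof -
          have "ennreal C' * ennreal (1 / \<rho> s) = ennreal (C' * (1 / \<rho> s))"
            by (rule ennreal_mult[symmetric]) (use \<rho>pos[OF s] in \<open>auto simp: C'_def\<close>)
          then show ?thesis by simp
        qed
        also have "\<dots> \<le> ennreal C' * (D s * ennreal (1 / \<phi> s))" by (rule mult_left_mono[OF Dle[OF s]]) simp
        finally show ?thesis using s by (simp add: hv)
      next
        case False
        then show ?thesis by simp
      qed
    qed
    also have "\<dots> = ennreal C' * (\<integral>\<^sup>+ s. D s * h s \<partial>\<nu>)"
    proof (rule nn_integral_cmult)
      have "(\<lambda>s. D s) \<in> borel_measurable borel" unfolding D_def by measurable
      then show "(\<lambda>s. D s * h s) \<in> borel_measurable \<nu>" unfolding mcong using hm by measurable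
    qed
    also have "\<dots> < \<infinity>" using Dhfin by (simp add: ennreal_mult_less_top)
    finally show "x \<in> lorentz_space \<psi>" unfolding lorentz_space_def using mx by simp
  qed
  show ?thesis using classG_\<rho> lim incl by blast
qed

end
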